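(* Every stick graph is a grounded L-graph. Moreover, if $G$ is a stick graph with a stick representation in which the vertices of $A$ are vertical segments and the vertices of $B$ are horizontal segments, then $G$ has a grounded L-representation that is nice with respect to the bipartition $(A,B)$.
   Context: An L-shape is the union of a vertical segment and a horizontal segment such that the bottom end-point of the vertical segment coincides with the left end-point of the horizontal segment; the top end-point of the vertical segment is its anchor. A grounded L-representation of a graph assigns an L-shape to each vertex, all anchors lying on a common horizontal line, so that two vertices are adjacent iff their L-shapes intersect; a graph having one is a grounded L-graph. A stick graph is a bipartite graph $G=(A\cup B,E)$ that is the intersection graph of a set of vertical segments (representing $A$) and a set of horizontal segments (representing $B$) such that the bottom end-points of the vertical segments and the left end-points of the horizontal segments all lie on a common straight line of slope $-1$; this is a stick representation. For a bipartite graph $G=(A\cup B,E)$, a grounded L-representation is nice (with respect to $(A,B)$) if every L-shape representing a vertex of $A$ meets other L-shapes only on its horizontal segment, and every L-shape representing a vertex of $B$ meets other L-shapes only on its vertical segment. *)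

theory Defs
  imports Complex_Main
begin

definition simple_graph :: "'v set \<Rightarrow> ('v \<Rightarrow> 'v \<Rightarrow> bool) \<Rightarrow> bool" where
  "simple_graph V E \<longleftrightarrow>
     (\<forall>u v. E u v \<longrightarrow> u \<in> V \<and> v \<in> V) \<and>
     (\<forall>u v. E u v \<longrightarrow> E v u) \<and> (\<forall>v. \<not> E v v)"

definition bipartition :: "'v set \<Rightarrow> ('v \<Rightarrow> 'v \<Rightarrow> bool) \<Rightarrow> 'v set \<Rightarrow> 'v set \<Rightarrow> bool" where
  "bipartition V E A B \<longleftrightarrow>
     A \<inter> B = {} \<and> A \<union> B = V \<and>
     (\<forall>u\<in>A. \<forall>v\<in>A. \<not> E u v) \<and> (\<forall>u\<in>B. \<forall>v\<in>B. \<not> E u v)"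

text \<open>An L-shape (x, t, b, r): vertical segment from the anchor (x,t) down to (x,b),
  horizontal segment from (x,b) to (r,b). Both segments are non-degenerate.\<close>
type_synonym lshape = "real \<times> real \<times> real \<times> real"

definition valid_L :: "lshape \<Rightarrow> bool" where
  "valid_L l = (case l of (x, t, b, r) \<Rightarrow> b < t \<and> x < r)"

definition anchor :: "lshape \<Rightarrow> real \<times> real" where
  "anchor l = (case l of (x, t, b, r) \<Rightarrow> (x, t))"

definition vert_part :: "lshape \<Rightarrow> (real \<times> real) set" where
  "vert_part l = (case l of (x, t, b, r) \<Rightarrow> {(x, y) | y. b \<le> y \<and> y \<le> t})"

definition horiz_part :: "lshape \<Rightarrow> (real \<times> real) set" where
  "horiz_part l = (case l of (x, t, b, r) \<Rightarrow> {(z, b) | z. x \<le> z \<and> z \<le> r})"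

definition Lset :: "lshape \<Rightarrow> (real \<times> real) set" where
  "Lset l = vert_part l \<union> horiz_part l"

definition grounded_L_rep :: "'v set \<Rightarrow> ('v \<Rightarrow> 'v \<Rightarrow> bool) \<Rightarrow> ('v \<Rightarrow> lshape) \<Rightarrow> bool" where
  "grounded_L_rep V E L \<longleftrightarrow>
     (\<forall>v\<in>V. valid_L (L v)) \<and>
     (\<exists>c. \<forall>v\<in>V. snd (anchor (L v)) = c) \<and>
     (\<forall>u\<in>V. \<forall>v\<in>V. u \<noteq> v \<longrightarrow> (E u v \<longleftrightarrow> Lset (L u) \<inter> Lset (L v) \<noteq> {}))"

definition grounded_L_graph :: "'v set \<Rightarrow> ('v \<Rightarrow> 'v \<Rightarrow> bool) \<Rightarrow> bool" where
  "grounded_L_graph V E \<longleftrightarrow> (\<exists>L. grounded_L_rep V E L)"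

definition nice_L_rep ::
  "'v set \<Rightarrow> 'v set \<Rightarrow> 'v set \<Rightarrow> ('v \<Rightarrow> lshape) \<Rightarrow> bool" where
  "nice_L_rep V A B L \<longleftrightarrow>
     (\<forall>a\<in>A. \<forall>u\<in>V. u \<noteq> a \<longrightarrow> Lset (L a) \<inter> Lset (L u) \<subseteq> horiz_part (L a)) \<and>
     (\<forall>b\<in>B. \<forall>u\<in>V. u \<noteq> b \<longrightarrow> Lset (L b) \<inter> Lset (L u) \<subseteq> vert_part (L b))"

text \<open>The common line is y = c - x (slope -1). A stick is given by (p, h): its
  bottom/left end-point is (p, c - p), and h > 0 is its length.\<close>
definition vstick :: "real \<Rightarrow> real \<times> real \<Rightarrow> (real \<times> real) set" where
  "vstick c s = (case s of (p, h) \<Rightarrow> {(p, y) | y. c - p \<le> y \<and> y \<le> c - p + h})"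

definition hstick :: "real \<Rightarrow> real \<times> real \<Rightarrow> (real \<times> real) set" where
  "hstick c s = (case s of (q, w) \<Rightarrow> {(z, c - q) | z. q \<le> z \<and> z \<le> q + w})"

definition stick_rep ::
  "'v set \<Rightarrow> ('v \<Rightarrow> 'v \<Rightarrow> bool) \<Rightarrow> 'v set \<Rightarrow> 'v set \<Rightarrow> real \<Rightarrow> ('v \<Rightarrow> real \<times> real) \<Rightarrow> bool" where
  "stick_rep V E A B c S \<longleftrightarrow>
     bipartition V E A B \<and>
     (\<forall>v\<in>V. snd (S v) > 0) \<and>
     (\<forall>a\<in>A. \<forall>b\<in>B. E a b \<longleftrightarrow> vstick c (S a) \<inter> hstick c (S b) \<noteq> {})"

definition stick_graph :: "'v set \<Rightarrow> ('v \<Rightarrow> 'v \<Rightarrow> bool) \<Rightarrow> bool" where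
  "stick_graph V E \<longleftrightarrow> (\<exists>A B c S. stick_rep V E A B c S)"

end

theory Submission imports Defs begin

lemma L_int:
  assumes "x1 < x2" "b1 \<le> 0" "x1 \<le> r1" "x2 \<le> r2"
  shows "Lset (x1,0,b1,r1) \<inter> Lset (x2,0,b2,r2) \<noteq> {} \<longleftrightarrow> x2 \<le> r1 \<and> b2 \<le> b1"
proof
  assume "Lset (x1,0,b1,r1) \<inter> Lset (x2,0,b2,r2) \<noteq> {}"
  then obtain X Y where "(X,Y) \<in> Lset (x1,0,b1,r1)" "(X,Y) \<in> Lset (x2,0,b2,r2)" by auto
  then show "x2 \<le> r1 \<and> b2 \<le> b1" using assms
    by (auto simp: Lset_def vert_part_def horiz_part_def)
next
  assume "x2 \<le> r1 \<and> b2 \<le> b1"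
  then have "(x2,b1) \<in> Lset (x1,0,b1,r1) \<inter> Lset (x2,0,b2,r2)" using assms
    by (auto simp: Lset_def vert_part_def horiz_part_def)
  then show "Lset (x1,0,b1,r1) \<inter> Lset (x2,0,b2,r2) \<noteq> {}" by blast
qed

lemma L_sub_h:
  assumes "x1 < x2"
  shows "Lset (x1,0,b1,r1) \<inter> Lset (x2,0,b2,r2) \<subseteq> horiz_part (x1,0,b1,r1)"
  using assms by (auto simp: Lset_def vert_part_def horiz_part_def)

lemma L_sub_v:
  assumes "x1 < x2" "b1 \<noteq> b2"
  shows "Lset (x1,0,b1,r1) \<inter> Lset (x2,0,b2,r2) \<subseteq> vert_part (x2,0,b2,r2)"
  using assms by (auto simp: Lset_def vert_part_def horiz_part_def)

lemma L_empty:
  assumes "r1 < x2" "x1 \<le> r1"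
  shows "Lset (x1,0,b1,r1) \<inter> Lset (x2,0,b2,r2) = {}"
  using assms by (auto simp: Lset_def vert_part_def horiz_part_def)

lemma stick_int:
  "vstick c (p,h) \<inter> hstick c (q,w) \<noteq> {} \<longleftrightarrow> 0 \<le> p - q \<and> p - q \<le> w \<and> p - q \<le> h"
proof
  assume "vstick c (p,h) \<inter> hstick c (q,w) \<noteq> {}"
  then obtain X Y where "(X,Y) \<in> vstick c (p,h)" "(X,Y) \<in> hstick c (q,w)" by auto
  then show "0 \<le> p - q \<and> p - q \<le> w \<and> p - q \<le> h"
    by (auto simp: vstick_def hstick_def)
next
  assume "0 \<le> p - q \<and> p - q \<le> w \<and> p - q \<le> h"
  then have "(p, c - q) \<in> vstick c (p,h) \<inter> hstick c (q,w)"
    by (auto simp: vstick_def hstick_def)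
  then show "vstick c (p,h) \<inter> hstick c (q,w) \<noteq> {}" by blast
qed

lemma delta_ex:
  fixes T :: "real set"
  assumes "finite T"
  shows "\<exists>d>0. \<forall>t\<in>T. t \<noteq> 0 \<longrightarrow> d \<le> \<bar>t\<bar>"
proof (cases "{\<bar>t\<bar> | t. t \<in> T \<and> t \<noteq> 0} = {}")
  case True then show ?thesis by (intro exI[of _ 1]) auto
next
  case False
  let ?P = "{\<bar>t\<bar> | t. t \<in> T \<and> t \<noteq> 0}"
  have fin: "finite ?P" using assms by auto
  have "Min ?P \<in> ?P" using fin False by (rule Min_in)
  then have pos: "Min ?P > 0" by auto
  show ?thesis using pos fin by (intro exI[of _ "Min ?P"]) (auto intro!: Min_le)
qed


theorem proposition1:
  fixes V :: "'v set" and E :: "'v \<Rightarrow> 'v \<Rightarrow> bool"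
  assumes "finite V" and "simple_graph V E"
  shows "(stick_graph V E \<longrightarrow> grounded_L_graph V E) \<and>
         (\<forall>A B c S. stick_rep V E A B c S \<longrightarrow>
            (\<exists>L. grounded_L_rep V E L \<and> nice_L_rep V A B L))"
proof -
  have sg1: "\<And>u v. E u v \<Longrightarrow> u \<in> V \<and> v \<in> V" and sg2: "\<And>u v. E u v \<Longrightarrow> E v u"
    using assms(2) by (auto simp: simple_graph_def)
  have main: "\<exists>L. grounded_L_rep V E L \<and> nice_L_rep V A B L" if sr: "stick_rep V E A B c S" for A B c S
  proof -
    have bip: "bipartition V E A B" and hpos0: "\<forall>v\<in>V. snd (S v) > 0"
      and adjS: "\<forall>a\<in>A. \<forall>b\<in>B. E a b \<longleftrightarrow> vstick c (S a) \<inter> hstick c (S b) \<noteq> {}"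
      using sr by (auto simp: stick_rep_def)
    have disj: "A \<inter> B = {}" and AB: "A \<union> B = V" and noA: "\<forall>u\<in>A. \<forall>v\<in>A. \<not> E u v"
      and noB: "\<forall>u\<in>B. \<forall>v\<in>B. \<not> E u v"
      using bip by (auto simp: bipartition_def)
    define p where "p v = fst (S v)" for v
    define h where "h v = snd (S v)" for v
    have hpos: "\<And>v. v \<in> V \<Longrightarrow> h v > 0" using hpos0 by (simp add: h_def)
    have adj: "E a b \<longleftrightarrow> 0 \<le> p a - p b \<and> p a - p b \<le> h b \<and> p a - p b \<le> h a"
      if "a \<in> A" "b \<in> B" for a b
    proof -
      have "S a = (p a, h a)" "S b = (p b, h b)" by (simp_all add: p_def h_def)
      then show ?thesis using adjS that stick_int[of c "p a" "h a" "p b" "h b"] by auto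
    qed
    define T where "T = (\<lambda>(u,v). p u - p v) ` (V \<times> V) \<union> (\<lambda>(u,v). p u - p v - h u) ` (V \<times> V)
       \<union> (\<lambda>(u,v). p u - p v - h v) ` (V \<times> V)"
    have "finite T" using assms(1) by (simp add: T_def)
    then obtain d where dpos: "d > 0" and dT: "\<forall>t\<in>T. t \<noteq> 0 \<longrightarrow> d \<le> \<bar>t\<bar>"
      using delta_ex by blast
    have d1: "d \<le> \<bar>p u - p v\<bar>" if "u\<in>V" "v\<in>V" "p u \<noteq> p v" for u v
      using dT that unfolding T_def by force
    have d2: "d \<le> \<bar>p u - p v - h u\<bar>" if "u\<in>V" "v\<in>V" "p u - p v \<noteq> h u" for u v
      using dT that unfolding T_def by force
    have d3: "d \<le> \<bar>p u - p v - h v\<bar>" if "u\<in>V" "v\<in>V" "p u - p v \<noteq> h v" for u v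
      using dT that unfolding T_def by force
    define n where "n = card V"
    obtain i where ibij: "bij_betw i V {0..<n}"
      using ex_bij_betw_finite_nat[OF assms(1)] n_def by blast
    have iinj: "inj_on i V" and ilt: "\<And>v. v\<in>V \<Longrightarrow> i v < n" using ibij
      by (auto simp: bij_betw_def)
    have npos: "\<And>v. v \<in> V \<Longrightarrow> real n > 0" using assms(1) n_def card_gt_0_iff by fastforce
    define e where "e = d / 10"
    have epos: "e > 0" using dpos by (simp add: e_def)
    define s where "s v = e * real (i v) / real n" for v
    have s_bnd: "0 \<le> s v \<and> s v < e" if "v \<in> V" for v
    proof -
      have "real (i v) < real n" using ilt[OF that] by simp
      then have "real (i v) / real n < 1" using npos[OF that] by simp
      then have "e * (real (i v) / real n) < e * 1" using epos by (intro mult_strict_left_mono) auto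
      then show ?thesis using epos npos[OF that] by (simp add: s_def)
    qed
    define eta where "eta = e / (2 * real n)"
    have s_sep: "eta < \<bar>s u - s v\<bar>" if "u\<in>V" "v\<in>V" "u\<noteq>v" for u v
    proof -
      have "i u \<noteq> i v" using iinj that by (meson inj_on_def)
      then have one: "1 \<le> \<bar>real (i u) - real (i v)\<bar>" by linarith
      have eq: "s u - s v = (e / real n) * (real (i u) - real (i v))"
        by (simp add: s_def diff_divide_distrib right_diff_distrib)
      have "e / real n * 1 \<le> e / real n * \<bar>real (i u) - real (i v)\<bar>"
        using one epos npos[OF that(1)] by (intro mult_left_mono) auto
      moreover have "eta < e / real n" using epos npos[OF that(1)] by (simp add: eta_def field_simps)
      ultimately show ?thesis using eq epos npos[OF that(1)] by (simp add: abs_mult abs_divide)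
    qed
    have eta_pos: "\<And>v. v \<in> V \<Longrightarrow> eta > 0" using epos npos by (simp add: eta_def)
    have eta_le: "\<And>v. v \<in> V \<Longrightarrow> eta \<le> e / 2"
    proof -
      fix v assume "v \<in> V"
      then have "real n \<ge> 1" using npos[of v] by simp
      then show "eta \<le> e / 2" using epos by (simp add: eta_def field_simps)
    qed
    define x where "x v = (if v \<in> A then - p v - 3*e + s v else - p v + s v)" for v
    define L :: "'v \<Rightarrow> lshape" where "L v = (if v \<in> A then (x v, 0, - exp (- x v), x v + h v + 5*e)
       else (x v, 0, - exp (- (x v - h v - 5*e)), x v + eta))" for v
    have Lform: "L v = (x v, 0, fst (snd (snd (L v))), snd (snd (snd (L v))))" for v
      by (simp add: L_def)
    have BnA: "\<And>v. v \<in> B \<Longrightarrow> v \<notin> A" using disj by blast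
    have VnA: "\<And>v. v \<in> V \<Longrightarrow> v \<notin> A \<Longrightarrow> v \<in> B" using AB by blast
    have AV: "\<And>v. v \<in> A \<Longrightarrow> v \<in> V" and BV: "\<And>v. v \<in> B \<Longrightarrow> v \<in> V" using AB by blast+
    have xdist: "x u \<noteq> x v" if "u \<in> V" "v \<in> V" "u \<noteq> v" for u v
    proof -
      have su: "0 \<le> s u \<and> s u < e" and sv: "0 \<le> s v \<and> s v < e" using s_bnd that by auto
      have sep: "eta < \<bar>s u - s v\<bar>" using s_sep[OF that] .
      have et: "eta > 0" using eta_pos[OF that(1)] .
      show ?thesis
      proof (cases "p u = p v")
        case True
        then show ?thesis using sep et su sv epos by (auto simp: x_def split: if_splits abs_split)
      next
        case False
        then have "d \<le> \<bar>p u - p v\<bar>" using d1 that by blast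
        then show ?thesis using su sv epos e_def by (auto simp: x_def split: if_splits abs_split)
      qed
    qed
    have ord: "(E u v \<longleftrightarrow> Lset (L u) \<inter> Lset (L v) \<noteq> {}) \<and>
       (u \<in> A \<longrightarrow> Lset (L u) \<inter> Lset (L v) \<subseteq> horiz_part (L u)) \<and>
       (u \<in> B \<longrightarrow> Lset (L u) \<inter> Lset (L v) = {}) \<and>
       (v \<in> A \<longrightarrow> Lset (L u) \<inter> Lset (L v) = {}) \<and>
       (v \<in> B \<longrightarrow> Lset (L u) \<inter> Lset (L v) \<subseteq> vert_part (L v))"
      if "u \<in> V" "v \<in> V" "x u < x v" for u v
    proof -
      have su: "0 \<le> s u \<and> s u < e" and sv: "0 \<le> s v \<and> s v < e" using s_bnd that by auto
      have hu: "h u > 0" and hv: "h v > 0" using hpos that by auto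
      have et: "eta > 0" "eta \<le> e / 2" using eta_pos[OF that(1)] eta_le[OF that(1)] by auto
      have e10: "d = 10 * e" by (simp add: e_def)
      have uv: "u \<noteq> v" using that(3) by auto
      have sep: "eta < \<bar>s u - s v\<bar>" using s_sep[OF that(1,2) uv] .
      show ?thesis
      proof (cases "u \<in> A")
        case uA: True
        have Lu: "L u = (x u, 0, - exp (- x u), x u + h u + 5*e)" using uA by (simp add: L_def)
        have xu: "x u = - p u - 3*e + s u" using uA by (simp add: x_def)
        have hor: "Lset (L u) \<inter> Lset (L v) \<subseteq> horiz_part (L u)"
          unfolding Lu by (subst Lform) (rule L_sub_h[OF that(3)])
        show ?thesis
        proof (cases "v \<in> A")
          case vA: True
          have Lv: "L v = (x v, 0, - exp (- x v), x v + h v + 5*e)" using vA by (simp add: L_def)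
          have "\<not> (- exp (- x v) \<le> - exp (- x u))" using that(3) by simp
          moreover have "Lset (L u) \<inter> Lset (L v) \<noteq> {} \<longleftrightarrow>
              x v \<le> x u + h u + 5*e \<and> - exp (- x v) \<le> - exp (- x u)"
            unfolding Lu Lv using that(3) hu hv epos by (intro L_int) auto
          ultimately have emp: "Lset (L u) \<inter> Lset (L v) = {}" by blast
          show ?thesis using emp noA uA vA disj hor by auto
        next
          case vnA: False
          have vB: "v \<in> B" using VnA that(2) vnA by blast
          have Lv: "L v = (x v, 0, - exp (- (x v - h v - 5*e)), x v + eta)" using vnA by (simp add: L_def)
          have xv: "x v = - p v + s v" using vnA by (simp add: x_def)
          define D where "D = p u - p v"
          have D0: "0 \<le> D"
          proof (rule ccontr)
            assume "\<not> 0 \<le> D"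
            then have "d \<le> \<bar>p u - p v\<bar>" using d1 that(1,2) D_def by force
            then show False using \<open>\<not> 0 \<le> D\<close> D_def xu xv that(3) su sv e10 epos by linarith
          qed
          have c1: "D \<le> h u \<longleftrightarrow> x v \<le> x u + h u + 5*e"
          proof (cases "D = h u")
            case True then show ?thesis using xu xv su sv D_def epos by linarith
          next
            case False
            then have "d \<le> \<bar>p u - p v - h u\<bar>" using d2 that(1,2) D_def by force
            then show ?thesis using xu xv su sv D_def epos e10 by (auto split: abs_split)
          qed
          have c2: "D \<le> h v \<longleftrightarrow> x v - h v - 5*e \<le> x u"
          proof (cases "D = h v")
            case True then show ?thesis using xu xv su sv D_def epos by linarith
          next
            case False
            then have "d \<le> \<bar>p u - p v - h v\<bar>" using d3 that(1,2) D_def by force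
            then show ?thesis using xu xv su sv D_def epos e10 by (auto split: abs_split)
          qed
          have c3: "x v - h v - 5*e \<noteq> x u"
          proof (cases "D = h v")
            case True then show ?thesis using xu xv su sv D_def epos by linarith
          next
            case False
            then have "d \<le> \<bar>p u - p v - h v\<bar>" using d3 that(1,2) D_def by force
            then show ?thesis using xu xv su sv D_def epos e10 by (auto split: abs_split)
          qed
          have Eiff: "E u v \<longleftrightarrow> D \<le> h v \<and> D \<le> h u" using adj[OF uA vB] D0 D_def by auto
          have int: "Lset (L u) \<inter> Lset (L v) \<noteq> {} \<longleftrightarrow>
              x v \<le> x u + h u + 5*e \<and> - exp (- (x v - h v - 5*e)) \<le> - exp (- x u)"
            unfolding Lu Lv using that(3) hu epos et
            by (intro L_int) auto
          have ver: "Lset (L u) \<inter> Lset (L v) \<subseteq> vert_part (L v)"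
            unfolding Lu Lv using that(3) c3 by (intro L_sub_v) auto
          show ?thesis using Eiff int c1 c2 ver hor uA vB disj by auto
        qed
      next
        case unA: False
        have uB: "u \<in> B" using VnA that(1) unA by blast
        have Lu: "L u = (x u, 0, - exp (- (x u - h u - 5*e)), x u + eta)" using unA by (simp add: L_def)
        have xu: "x u = - p u + s u" using unA by (simp add: x_def)
        have gap: "x u + eta < x v \<and> (v \<in> A \<longrightarrow> d \<le> p u - p v)"
        proof (cases "v \<in> A")
          case vA: True
          have xv: "x v = - p v - 3*e + s v" using vA by (simp add: x_def)
          have "p u \<noteq> p v" using xu xv su sv that(3) epos by linarith
          then have "d \<le> \<bar>p u - p v\<bar>" using d1 that(1,2) by blast
          then have "d \<le> p u - p v" using xu xv su sv that(3) epos e10 by (auto split: abs_split)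
          then show ?thesis using xu xv su sv that(3) epos e10 et vA by auto
        next
          case vnA: False
          have xv: "x v = - p v + s v" using vnA by (simp add: x_def)
          show ?thesis
          proof (cases "p u = p v")
            case True
            then show ?thesis using xu xv sep that(3) vnA by (auto split: abs_split)
          next
            case False
            then have "d \<le> \<bar>p u - p v\<bar>" using d1 that(1,2) by blast
            then show ?thesis using xu xv su sv that(3) epos e10 et vnA by (auto split: abs_split)
          qed
        qed
        have emp: "Lset (L u) \<inter> Lset (L v) = {}"
          unfolding Lu using gap et by (subst Lform) (rule L_empty; auto)
        have nE: "\<not> E u v"
        proof
          assume "E u v"
          show False
          proof (cases "v \<in> A")
            case True
            then have "E v u" using sg2 \<open>E u v\<close> by blast
            then have "0 \<le> p v - p u" using adj[OF True uB] by auto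
            then show False using gap True dpos by linarith
          next
            case False
            then show False using noB uB VnA that(2) \<open>E u v\<close> by blast
          qed
        qed
        show ?thesis using emp nE unA by auto
      qed
    qed

    have ord': "(E u v \<longleftrightarrow> Lset (L u) \<inter> Lset (L v) \<noteq> {}) \<and>
       (u \<in> A \<longrightarrow> Lset (L u) \<inter> Lset (L v) \<subseteq> horiz_part (L u)) \<and>
       (u \<in> B \<longrightarrow> Lset (L u) \<inter> Lset (L v) \<subseteq> vert_part (L u))"
      if "u \<in> V" "v \<in> V" "u \<noteq> v" for u v
    proof (cases "x u < x v")
      case True
      then show ?thesis using ord[OF that(1,2) True] disj by blast
    next
      case False
      then have "x v < x u" using xdist[OF that] by linarith
      from ord[OF that(2,1) this] sg2 show ?thesis by (auto simp: Int_commute)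
    qed
    have "grounded_L_rep V E L"
      unfolding grounded_L_rep_def
    proof (intro conjI ballI impI)
      fix v assume "v \<in> V"
      then show "valid_L (L v)" using hpos[of v] epos eta_pos[of v]
        by (simp add: L_def valid_L_def)
    next
      show "\<exists>c. \<forall>v\<in>V. snd (anchor (L v)) = c"
        by (intro exI[of _ 0]) (simp add: L_def anchor_def)
    next
      fix u v assume "u \<in> V" "v \<in> V" "u \<noteq> v"
      then show "E u v \<longleftrightarrow> Lset (L u) \<inter> Lset (L v) \<noteq> {}" using ord' by blast
    qed
    moreover have "nice_L_rep V A B L"
      unfolding nice_L_rep_def
    proof (intro conjI ballI impI)
      fix a u assume "a \<in> A" "u \<in> V" "u \<noteq> a"
      then show "Lset (L a) \<inter> Lset (L u) \<subseteq> horiz_part (L a)" using ord'[of a u] AV by blast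
    next
      fix a u assume "a \<in> B" "u \<in> V" "u \<noteq> a"
      then show "Lset (L a) \<inter> Lset (L u) \<subseteq> vert_part (L a)" using ord'[of a u] BV by blast
    qed
    ultimately show ?thesis by blast
  qed
  show ?thesis
    using main unfolding stick_graph_def grounded_L_graph_def by blast
qed

end
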